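(* Let $a>0$, $p>1$, and let $\phi\in C^1((0,a])\cap C^0([0,a])$ satisfy $\phi(0)=0$, $\phi(t)>0$ for $t\in(0,a]$, and $c_1t^{p-1+\delta}\le\phi(t)\le c_2t^{p-1+\delta}$ for all $t\in(0,a]$, for some constants $c_1,c_2,\delta>0$. Define \[ \eta_a(t)=\frac{\phi(t)^{-\frac1{p-1}}}{\int_t^a\phi(\sigma)^{-\frac1{p-1}}\,d\sigma},\quad t\in(0,a). \] Then for all $t\in(0,a)$, \[ \left(\frac{c_1}{c_2}\right)^{\frac1{p-1}}\frac{\delta}{p-1}\,\frac{a^{\delta/(p-1)}}{t\,(a^{\delta/(p-1)}-t^{\delta/(p-1)})}\le\eta_a(t)\le\left(\frac{c_2}{c_1}\right)^{\frac1{p-1}}\frac{\delta}{p-1}\,\frac{a^{\delta/(p-1)}}{t\,(a^{\delta/(p-1)}-t^{\delta/(p-1)})}. \] *)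

theory Defs
  imports "HOL-Analysis.Analysis"
begin

definition eta :: "(real \<Rightarrow> real) \<Rightarrow> real \<Rightarrow> real \<Rightarrow> real \<Rightarrow> real" where
  "eta \<phi> p a t = (\<phi> t) powr (- 1 / (p - 1)) /
      integral {t..a} (\<lambda>\<sigma>. (\<phi> \<sigma>) powr (- 1 / (p - 1)))"

end

theory Submission
  imports Defs
begin

lemma int_pow:
  fixes t a e :: real
  assumes "0 < t" "t \<le> a" "e > 0"
  shows "((\<lambda>s. s powr (-(1+e))) has_integral (t powr (-e) - a powr (-e)) / e) {t..a}"
proof -
  define G where "G s = - (s powr (-e)) / e" for s :: real
  have "((\<lambda>s. s powr (-(1+e))) has_integral (G a - G t)) {t..a}"
  proof (rule fundamental_theorem_of_calculus[OF assms(2)])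
    fix x assume x: "x \<in> {t..a}"
    then have "x > 0" using assms by auto
    have "(G has_real_derivative (- ((-e) * x powr (-e - 1)) / e)) (at x)"
      using DERIV_cdivide[OF DERIV_minus[OF has_real_derivative_powr[OF \<open>x>0\<close>, of "-e"]], of e]
      unfolding G_def[abs_def] by simp
    moreover have "- ((-e) * x powr (-e - 1)) / e = x powr (-(1+e))"
    proof -
      have h: "-e - 1 = -(1+e)" by simp
      show ?thesis unfolding h using assms by simp
    qed
    ultimately show "(G has_vector_derivative x powr (-(1+e))) (at x within {t..a})"
      by (simp add: has_real_derivative_iff_has_vector_derivative[symmetric] has_field_derivative_at_within)
  qed
  moreover have "G a - G t = (t powr (-e) - a powr (-e)) / e" by (simp add: G_def diff_divide_distrib)
  ultimately show ?thesis by simp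
qed

theorem lemma2p2:
  fixes \<phi> \<phi>' :: "real \<Rightarrow> real" and a p c1 c2 \<delta> :: real
  assumes "a > 0" and "p > 1"
    and cont: "continuous_on {0..a} \<phi>"
    and deriv: "\<And>t. t \<in> {0<..a} \<Longrightarrow> (\<phi> has_real_derivative \<phi>' t) (at t within {0<..a})"
    and deriv_cont: "continuous_on {0<..a} \<phi>'"
    and "\<phi> 0 = 0"
    and pos: "\<And>t. t \<in> {0<..a} \<Longrightarrow> \<phi> t > 0"
    and "c1 > 0" and "c2 > 0" and "\<delta> > 0"
    and bounds: "\<And>t. t \<in> {0<..a} \<Longrightarrow>
        c1 * t powr (p - 1 + \<delta>) \<le> \<phi> t \<and> \<phi> t \<le> c2 * t powr (p - 1 + \<delta>)"
    and t: "t \<in> {0<..<a}"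
  shows "(c1 / c2) powr (1 / (p - 1)) * (\<delta> / (p - 1)) *
           (a powr (\<delta> / (p - 1)) / (t * (a powr (\<delta> / (p - 1)) - t powr (\<delta> / (p - 1)))))
           \<le> eta \<phi> p a t
       \<and> eta \<phi> p a t \<le>
         (c2 / c1) powr (1 / (p - 1)) * (\<delta> / (p - 1)) *
           (a powr (\<delta> / (p - 1)) / (t * (a powr (\<delta> / (p - 1)) - t powr (\<delta> / (p - 1)))))"
proof -
  define q where "q = 1 / (p - 1)"
  define e where "e = \<delta> / (p - 1)"
  have q0: "q > 0" and e0: "e > 0" using assms by (auto simp: q_def e_def)
  have t0: "0 < t" "t < a" using t by auto
  have ex: "(p - 1 + \<delta>) * (-q) = -(1+e)" using assms by (simp add: q_def e_def field_simps)
  have mq: "-1 / (p - 1) = -q" by (simp add: q_def)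
  define g where "g s = s powr (-(1+e))" for s
  have pw: "\<And>s. s > 0 \<Longrightarrow> (c * s powr (p - 1 + \<delta>)) powr (-q) = c powr (-q) * g s" if "c > 0" for c
    using that ex by (simp add: powr_mult powr_powr g_def)
  have lo: "c2 powr (-q) * g s \<le> \<phi> s powr (-q)" and hi: "\<phi> s powr (-q) \<le> c1 powr (-q) * g s"
    if "s \<in> {0<..a}" for s
  proof -
    have s0: "s > 0" using that by auto
    have b: "c1 * s powr (p - 1 + \<delta>) \<le> \<phi> s" "\<phi> s \<le> c2 * s powr (p - 1 + \<delta>)" using bounds[OF that] by auto
    have "(c2 * s powr (p - 1 + \<delta>)) powr (-q) \<le> \<phi> s powr (-q)"
      by (rule powr_mono2'[OF _ pos[OF that] b(2)]) (use q0 in auto)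
    then show "c2 powr (-q) * g s \<le> \<phi> s powr (-q)" using pw[OF \<open>c2>0\<close> s0] by simp
    have "\<phi> s powr (-q) \<le> (c1 * s powr (p - 1 + \<delta>)) powr (-q)"
      by (rule powr_mono2') (use q0 s0 \<open>c1>0\<close> b(1) in auto)
    then show "\<phi> s powr (-q) \<le> c1 powr (-q) * g s" using pw[OF \<open>c1>0\<close> s0] by simp
  qed
  define I0 where "I0 = (t powr (-e) - a powr (-e)) / e"
  have gI: "(g has_integral I0) {t..a}" unfolding g_def I0_def using int_pow[of t a e] t0 e0 by simp
  have sub: "{t..a} \<subseteq> {0<..a}" using t0 by auto
  have contf: "continuous_on {t..a} (\<lambda>s. \<phi> s powr (-q))"
  proof (rule continuous_on_powr)
    show "continuous_on {t..a} \<phi>" by (rule continuous_on_subset[OF cont]) (use t0 in auto)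
    show "\<forall>s\<in>{t..a}. \<phi> s \<noteq> 0" using pos t0 by (smt (verit) greaterThanAtMost_iff atLeastAtMost_iff)
    show "continuous_on {t..a} (\<lambda>x. - q)" by simp
  qed
  then have fint: "(\<lambda>s. \<phi> s powr (-q)) integrable_on {t..a}" by (rule integrable_continuous_interval)
  define I where "I = integral {t..a} (\<lambda>s. \<phi> s powr (-q))"
  have fI: "((\<lambda>s. \<phi> s powr (-q)) has_integral I) {t..a}" using fint I_def by auto
  have I1: "c2 powr (-q) * I0 \<le> I"
    by (rule has_integral_le[OF has_integral_mult_right[OF gI] fI]) (use lo sub in auto)
  have I2: "I \<le> c1 powr (-q) * I0"
    by (rule has_integral_le[OF fI has_integral_mult_right[OF gI]]) (use hi sub in auto)
  define X where "X = t powr e"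
  define Y where "Y = a powr e"
  have X0: "X > 0" and XY: "X < Y" using t0 e0 by (auto simp: X_def Y_def powr_less_mono2)
  have I0e: "I0 = (Y - X) / (e * X * Y)" unfolding I0_def X_def Y_def
    using t0 e0 by (simp add: powr_minus field_simps)
  have I0p: "I0 > 0" using I0e X0 XY e0 by simp
  have gt: "g t = 1 / (t * X)" unfolding g_def X_def using t0
  proof -
    have "t powr (1+e) = t * t powr e" using t0 by (simp add: powr_add)
    moreover have "t powr (-(1+e)) = inverse (t powr (1+e))" by (rule powr_minus)
    ultimately show "t powr (-(1+e)) = 1 / (t * t powr e)" by (simp add: divide_inverse)
  qed
  have etaeq: "eta \<phi> p a t = \<phi> t powr (-q) / I" by (simp add: eta_def I_def q_def)
  have ta: "t \<in> {0<..a}" using t0 by auto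
  have "c2 powr (-q) * I0 > 0" using I0p \<open>c2>0\<close> by simp
  then have Ip: "I > 0" using I1 by linarith
  have YX: "Y - X > 0" using XY by simp
  have target: "e * (Y / (t * (Y - X))) = g t / I0"
  proof -
    have "g t / I0 = (1 / (t * X)) / ((Y - X) / (e * X * Y))" by (simp add: gt I0e)
    also have "\<dots> = e * (Y / (t * (Y - X)))" using X0 YX t0 e0 by (simp add: field_simps)
    finally show ?thesis by simp
  qed
  have rq: "(u / v) powr q = v powr (-q) / u powr (-q)" if "u > 0" "v > 0" for u v
  proof -
    have "(u / v) powr q = u powr q / v powr q" using that by (simp add: powr_divide)
    then show ?thesis by (simp add: powr_minus divide_inverse mult.commute)
  qed
  have A: "(c1 / c2) powr q * (g t / I0) \<le> \<phi> t powr (-q) / I"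
  proof -
    have "(c1 / c2) powr q * (g t / I0) = (c2 powr (-q) * g t) / (c1 powr (-q) * I0)"
      using rq[OF \<open>c1>0\<close> \<open>c2>0\<close>] by simp
    also have "\<dots> \<le> \<phi> t powr (-q) / I"
      by (rule frac_le) (use lo[OF ta] I2 Ip gt X0 t0 \<open>c1>0\<close> \<open>c2>0\<close> in auto)
    finally show ?thesis .
  qed
  have B: "\<phi> t powr (-q) / I \<le> (c2 / c1) powr q * (g t / I0)"
  proof -
    have "\<phi> t powr (-q) / I \<le> (c1 powr (-q) * g t) / (c2 powr (-q) * I0)"
      by (rule frac_le) (use hi[OF ta] I1 I0p gt X0 t0 \<open>c2>0\<close> in auto)
    also have "\<dots> = (c2 / c1) powr q * (g t / I0)"
      using rq[OF \<open>c2>0\<close> \<open>c1>0\<close>] by simp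
    finally show ?thesis .
  qed
  show ?thesis using A B
    unfolding etaeq q_def[symmetric] e_def[symmetric] X_def[symmetric] Y_def[symmetric] mult.assoc target
    by simp
qed

end
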